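(* Let $K$ be a skew field, and let $D=(y_i^k)_{i,k\ge0}$ be an infinite matrix over $K$ (entry $y_i^k$ in row $k$, column $i$) which is generic. For $n\ge0$ let $D_n$ be the $(n+1)\times(n+1)$ matrix with entry $y_i^k$ in row $k$, column $i$, $0\le i,k\le n$, and let $(z_k^i)_n$ denote the entry in row $i$, column $k$ of $D_n^{-1}$, so that $(z_k^i)_n=(|D_n|_i^k)^{-1}$. Then for $0\le i,k\le n$, $$(z_k^i)_n=\sum_{m=\max(i,k)}^n\big(|D_m|_i^m\big)^{-1}\,|D_m|_m^m\,\big(|D_m|_m^k\big)^{-1}.$$
   Context: Quasideterminants: for a square matrix $M$ over $K$ with rows and columns indexed by $\{0,\ldots,n\}$, let $M_a^b$ denote its entry in row $b$, column $a$; the quasideterminant $|M|_a^b=M_a^b-r\,(M^{(b,a)})^{-1}c$, where $M^{(b,a)}$ is $M$ with row $b$ and column $a$ deleted, $r$ is row $b$ of $M$ with its column-$a$ entry deleted, and $c$ is column $a$ of $M$ with its row-$b$ entry deleted (for a $1\times1$ matrix, $|M|_0^0=M_0^0$). When $M$ is invertible, $|M|_a^b$ is the inverse of the entry of $M^{-1}$ in row $a$, column $b$; in the commutative case $|M|_a^b=(-1)^{a+b}\det M/\det M^{(b,a)}$. Genericity means all matrices and quasideterminants appearing are defined and invertible. *)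

theory Defs
  imports Main
begin

text \<open>Matrices over a skew field (type class division_ring) are functions
  M :: nat => nat => 'a, where M k i is the entry in row k, column i.
  A matrix "on R x C" only uses rows in R and columns in C.\<close>

definition is_inv :: "nat set \<Rightarrow> nat set \<Rightarrow> (nat \<Rightarrow> nat \<Rightarrow> 'a::division_ring) \<Rightarrow> (nat \<Rightarrow> nat \<Rightarrow> 'a) \<Rightarrow> bool" where
  "is_inv R C A B \<longleftrightarrow>
     (\<forall>k\<in>R. \<forall>k'\<in>R. (\<Sum>j\<in>C. A k j * B j k') = (if k = k' then 1 else 0)) \<and>
     (\<forall>j\<in>C. \<forall>j'\<in>C. (\<Sum>k\<in>R. B j k * A k j') = (if j = j' then 1 else 0))"

definition invertible_on :: "nat set \<Rightarrow> nat set \<Rightarrow> (nat \<Rightarrow> nat \<Rightarrow> 'a::division_ring) \<Rightarrow> bool" where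
  "invertible_on R C A \<longleftrightarrow> (\<exists>B. is_inv R C A B)"

definition minv :: "nat set \<Rightarrow> nat set \<Rightarrow> (nat \<Rightarrow> nat \<Rightarrow> 'a::division_ring) \<Rightarrow> (nat \<Rightarrow> nat \<Rightarrow> 'a)" where
  "minv R C A = (SOME B. is_inv R C A B)"

text \<open>Quasideterminant |M|_a^b of the (n+1)x(n+1) matrix M restricted to {0..n}:
  M_a^b - r (M^(b,a))^{-1} c, where M_a^b = M b a is the entry in row b, column a.\<close>
definition qdet :: "nat \<Rightarrow> (nat \<Rightarrow> nat \<Rightarrow> 'a::division_ring) \<Rightarrow> nat \<Rightarrow> nat \<Rightarrow> 'a" where
  "qdet n M a b = M b a -
     (\<Sum>j\<in>{0..n}-{a}. \<Sum>k\<in>{0..n}-{b}.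
        M b j * minv ({0..n}-{b}) ({0..n}-{a}) M j k * M k a)"

definition generic :: "(nat \<Rightarrow> nat \<Rightarrow> 'a::division_ring) \<Rightarrow> bool" where
  "generic D \<longleftrightarrow> (\<forall>n. invertible_on {0..n} {0..n} D \<and>
     (\<forall>a\<le>n. \<forall>b\<le>n. invertible_on ({0..n}-{b}) ({0..n}-{a}) D \<and> qdet n D a b \<noteq> 0))"

end

theory Submission
  imports Defs
begin

lemma is_inv_minv:
  assumes "invertible_on R C A"
  shows "is_inv R C A (minv R C A)"
  using assms unfolding invertible_on_def minv_def by (rule someI_ex)

lemma delta_sum_left:
  fixes f :: "nat \<Rightarrow> 'a::division_ring"
  assumes "finite C" "i \<in> C"
  shows "(\<Sum>j\<in>C. (if i = j then 1 else 0) * f j) = f i"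
proof -
  have "(\<Sum>j\<in>C. (if i = j then 1 else 0) * f j) = (\<Sum>j\<in>C. if i = j then f j else 0)"
    by (rule sum.cong) auto
  also have "\<dots> = f i" using assms by simp
  finally show ?thesis .
qed

lemma delta_sum_right:
  fixes f :: "nat \<Rightarrow> 'a::division_ring"
  assumes "finite C" "i \<in> C"
  shows "(\<Sum>j\<in>C. f j * (if j = i then 1 else 0)) = f i"
proof -
  have "(\<Sum>j\<in>C. f j * (if j = i then 1 else 0)) = (\<Sum>j\<in>C. if i = j then f j else 0)"
    by (rule sum.cong) auto
  also have "\<dots> = f i" using assms by simp
  finally show ?thesis .
qed

lemma inv_unique:
  fixes A B B' :: "nat \<Rightarrow> nat \<Rightarrow> 'a::division_ring"
  assumes inv: "is_inv R C A B" and fin: "finite R" "finite C"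
    and r: "\<forall>k\<in>R. \<forall>k'\<in>R. (\<Sum>j\<in>C. A k j * B' j k') = (if k = k' then 1 else 0)"
    and i: "i \<in> C" and k: "k \<in> R"
  shows "B i k = B' i k"
proof -
  have l: "\<forall>j\<in>C. \<forall>j'\<in>C. (\<Sum>k\<in>R. B j k * A k j') = (if j = j' then 1 else 0)"
    using inv unfolding is_inv_def by blast
  have "B' i k = (\<Sum>j\<in>C. (if i = j then 1 else 0) * B' j k)"
    using delta_sum_left[OF fin(2) i, where f="\<lambda>j. B' j k"] by simp
  also have "\<dots> = (\<Sum>j\<in>C. (\<Sum>k'\<in>R. B i k' * A k' j) * B' j k)"
    using l i by (intro sum.cong) auto
  also have "\<dots> = (\<Sum>j\<in>C. \<Sum>k'\<in>R. B i k' * (A k' j * B' j k))"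
    by (simp add: sum_distrib_right mult.assoc)
  also have "\<dots> = (\<Sum>k'\<in>R. \<Sum>j\<in>C. B i k' * (A k' j * B' j k))"
    by (rule sum.swap)
  also have "\<dots> = (\<Sum>k'\<in>R. B i k' * (\<Sum>j\<in>C. A k' j * B' j k))"
    by (simp add: sum_distrib_left)
  also have "\<dots> = (\<Sum>k'\<in>R. B i k' * (if k' = k then 1 else 0))"
    using r k by (intro sum.cong) auto
  also have "\<dots> = B i k" using delta_sum_right[OF fin(1) k, where f="\<lambda>j. B i j"] by simp
  finally show ?thesis by simp
qed

lemma qdet_mult:
  fixes D Z :: "nat \<Rightarrow> nat \<Rightarrow> 'a::division_ring"
  assumes Z: "is_inv {0..m} {0..m} D Z"
    and N: "is_inv ({0..m}-{b}) ({0..m}-{a}) D (minv ({0..m}-{b}) ({0..m}-{a}) D)"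
    and a: "a \<le> m" and b: "b \<le> m"
  shows "qdet m D a b * Z a b = 1"
proof -
  define N where "N = minv ({0..m}-{b}) ({0..m}-{a}) D"
  define R' where "R' = {0..m}-{b}"
  define C' where "C' = {0..m}-{a}"
  have ZR: "\<forall>k\<in>{0..m}. \<forall>k'\<in>{0..m}. (\<Sum>j\<in>{0..m}. D k j * Z j k') = (if k = k' then 1 else 0)"
    using Z unfolding is_inv_def by blast
  have NL: "\<forall>j\<in>C'. \<forall>j'\<in>C'. (\<Sum>k\<in>R'. N j k * D k j') = (if j = j' then 1 else 0)"
    using N unfolding is_inv_def N_def R'_def C'_def by blast
  have s1: "(\<Sum>j\<in>C'. D k j * Z j b) = - (D k a * Z a b)" if k: "k \<in> R'" for k
  proof -
    have "0 = (\<Sum>j\<in>{0..m}. D k j * Z j b)" using ZR k b unfolding R'_def by auto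
    also have "\<dots> = D k a * Z a b + (\<Sum>j\<in>C'. D k j * Z j b)"
      unfolding C'_def using a by (subst sum.remove[of _ a]) auto
    finally show ?thesis by (simp add: eq_neg_iff_add_eq_0 add.commute)
  qed
  have s2: "Z j' b = - (\<Sum>k\<in>R'. N j' k * D k a) * Z a b" if j': "j' \<in> C'" for j'
  proof -
    have "Z j' b = (\<Sum>j\<in>C'. (if j' = j then 1 else 0) * Z j b)"
      using delta_sum_left[of C' j' "\<lambda>j. Z j b"] j' unfolding C'_def by simp
    also have "\<dots> = (\<Sum>j\<in>C'. (\<Sum>k\<in>R'. N j' k * D k j) * Z j b)"
      using NL j' by (intro sum.cong) auto
    also have "\<dots> = (\<Sum>j\<in>C'. \<Sum>k\<in>R'. N j' k * (D k j * Z j b))"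
      by (simp add: sum_distrib_right mult.assoc)
    also have "\<dots> = (\<Sum>k\<in>R'. \<Sum>j\<in>C'. N j' k * (D k j * Z j b))"
      by (rule sum.swap)
    also have "\<dots> = (\<Sum>k\<in>R'. N j' k * (\<Sum>j\<in>C'. D k j * Z j b))"
      by (simp add: sum_distrib_left)
    also have "\<dots> = (\<Sum>k\<in>R'. N j' k * (- (D k a * Z a b)))"
      using s1 by (intro sum.cong) auto
    also have "\<dots> = - (\<Sum>k\<in>R'. N j' k * D k a) * Z a b"
      by (simp add: sum_distrib_right mult.assoc sum_negf)
    finally show ?thesis .
  qed
  have "1 = (\<Sum>j\<in>{0..m}. D b j * Z j b)" using ZR b by auto
  also have "\<dots> = D b a * Z a b + (\<Sum>j\<in>C'. D b j * Z j b)"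
    unfolding C'_def using a by (subst sum.remove[of _ a]) auto
  also have "(\<Sum>j\<in>C'. D b j * Z j b) = (\<Sum>j\<in>C'. D b j * (- (\<Sum>k\<in>R'. N j k * D k a) * Z a b))"
    using s2 by (intro sum.cong) auto
  also have "\<dots> = - (\<Sum>j\<in>C'. \<Sum>k\<in>R'. D b j * N j k * D k a) * Z a b"
    by (simp add: sum_distrib_right sum_distrib_left mult.assoc sum_negf)
  finally have "1 = (D b a - (\<Sum>j\<in>C'. \<Sum>k\<in>R'. D b j * N j k * D k a)) * Z a b"
    by (simp add: algebra_simps)
  then show ?thesis unfolding qdet_def N_def R'_def C'_def by simp
qed

lemma step_lemma:
  fixes D Z Y :: "nat \<Rightarrow> nat \<Rightarrow> 'a::division_ring"
  assumes Z: "is_inv {0..Suc n} {0..Suc n} D Z"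
    and Y: "is_inv {0..n} {0..n} D Y"
    and nz: "Z (Suc n) (Suc n) \<noteq> 0"
    and i: "i \<le> n" and k: "k \<le> n"
  shows "Z i k = Y i k + Z i (Suc n) * inverse (Z (Suc n) (Suc n)) * Z (Suc n) k"
proof -
  define N where "N = Suc n"
  define c where "c = inverse (Z N N)"
  define W where "W = (\<lambda>i k. Z i k - Z i N * c * Z N k)"
  have ZR: "\<forall>k\<in>{0..N}. \<forall>k'\<in>{0..N}. (\<Sum>j\<in>{0..N}. D k j * Z j k') = (if k = k' then 1 else 0)"
    using Z unfolding is_inv_def N_def by blast
  have split: "(\<Sum>j\<in>{0..n}. D k j * Z j k') = (if k = k' then 1 else 0) - D k N * Z N k'"
    if "k \<le> n" "k' \<le> N" for k k'
  proof -
    have "(\<Sum>j\<in>{0..N}. D k j * Z j k') = D k N * Z N k' + (\<Sum>j\<in>{0..n}. D k j * Z j k')"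
      unfolding N_def by (simp add: atLeast0_atMost_Suc)
    moreover have "(\<Sum>j\<in>{0..N}. D k j * Z j k') = (if k = k' then 1 else 0)"
      using ZR that unfolding N_def by auto
    ultimately show ?thesis by (simp add: algebra_simps)
  qed
  have r: "\<forall>k\<in>{0..n}. \<forall>k'\<in>{0..n}. (\<Sum>j\<in>{0..n}. D k j * W j k') = (if k = k' then 1 else 0)"
  proof (intro ballI)
    fix k k' assume kk: "k \<in> {0..n}" "k' \<in> {0..n}"
    have "(\<Sum>j\<in>{0..n}. D k j * W j k') = (\<Sum>j\<in>{0..n}. D k j * Z j k') - (\<Sum>j\<in>{0..n}. D k j * Z j N) * c * Z N k'"
      unfolding W_def by (simp add: algebra_simps sum_subtractf sum_distrib_right)
    also have "\<dots> = (if k = k' then 1 else 0) - D k N * Z N k' + D k N * (Z N N * c) * Z N k'"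
      using split[of k k'] split[of k N] kk unfolding N_def by (simp add: algebra_simps)
    also have "Z N N * c = 1" unfolding c_def using nz N_def by simp
    finally show "(\<Sum>j\<in>{0..n}. D k j * W j k') = (if k = k' then 1 else 0)" by simp
  qed
  have "Y i k = W i k" using inv_unique[OF Y _ _ r] i k by simp
  then show ?thesis unfolding W_def c_def N_def by simp
qed

lemma qdet_inv:
  fixes D :: "nat \<Rightarrow> nat \<Rightarrow> 'a::division_ring"
  assumes g: "generic D" and a: "a \<le> m" and b: "b \<le> m"
  shows "minv {0..m} {0..m} D a b = inverse (qdet m D a b)"
    and "minv {0..m} {0..m} D a b \<noteq> 0"
proof -
  have Z: "is_inv {0..m} {0..m} D (minv {0..m} {0..m} D)"
    using g is_inv_minv unfolding generic_def by blast
  have N: "is_inv ({0..m}-{b}) ({0..m}-{a}) D (minv ({0..m}-{b}) ({0..m}-{a}) D)"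
    using g a b is_inv_minv unfolding generic_def by blast
  have e: "qdet m D a b * minv {0..m} {0..m} D a b = 1" by (rule qdet_mult[OF Z N a b])
  then show "minv {0..m} {0..m} D a b = inverse (qdet m D a b)"
    by (metis inverse_unique)
  show "minv {0..m} {0..m} D a b \<noteq> 0" using e by auto
qed

theorem theorem6:
  fixes D :: "nat \<Rightarrow> nat \<Rightarrow> 'a::division_ring"
  assumes "generic D" and "i \<le> n" and "k \<le> n"
  shows "minv {0..n} {0..n} D i k =
    (\<Sum>m\<in>{max i k..n}. inverse (qdet m D i m) * qdet m D m m * inverse (qdet m D m k))"
proof -
  define Z where "Z = (\<lambda>m. minv {0..m} {0..m} D)"
  have T: "inverse (qdet m D i m) * qdet m D m m * inverse (qdet m D m k)
      = Z m i m * inverse (Z m m m) * Z m m k" if "i \<le> m" "k \<le> m" for m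
    using qdet_inv[OF assms(1)] that unfolding Z_def by simp
  have inv: "is_inv {0..m} {0..m} D (Z m)" for m
    using assms(1) is_inv_minv unfolding generic_def Z_def by blast
  have nz: "Z m a b \<noteq> 0" if "a \<le> m" "b \<le> m" for m a b
    using qdet_inv(2)[OF assms(1) that] unfolding Z_def by simp
  have "\<forall>i k. i \<le> n \<longrightarrow> k \<le> n \<longrightarrow> Z n i k = (\<Sum>m\<in>{max i k..n}. Z m i m * inverse (Z m m m) * Z m m k)"
  proof (induction n)
    case 0
    show ?case using nz[of 0 0 0] by simp
  next
    case (Suc n)
    show ?case
    proof (intro allI impI)
      fix i k assume ik: "i \<le> Suc n" "k \<le> Suc n"
      show "Z (Suc n) i k = (\<Sum>m\<in>{max i k..Suc n}. Z m i m * inverse (Z m m m) * Z m m k)"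
      proof (cases "i = Suc n \<or> k = Suc n")
        case True
        then have "{max i k..Suc n} = {Suc n}" using ik by auto
        then show ?thesis using True nz[of "Suc n" "Suc n" "Suc n"]
          by (auto simp: mult.assoc[symmetric] right_inverse simp del: max_def; simp add: mult.assoc left_inverse)
      next
        case False
        then have ik': "i \<le> n" "k \<le> n" using ik by auto
        have "{max i k..Suc n} = insert (Suc n) {max i k..n}" using ik' by auto
        then have "(\<Sum>m\<in>{max i k..Suc n}. Z m i m * inverse (Z m m m) * Z m m k)
           = Z (Suc n) i (Suc n) * inverse (Z (Suc n) (Suc n) (Suc n)) * Z (Suc n) (Suc n) k
             + (\<Sum>m\<in>{max i k..n}. Z m i m * inverse (Z m m m) * Z m m k)" by simp
        also have "(\<Sum>m\<in>{max i k..n}. Z m i m * inverse (Z m m m) * Z m m k) = Z n i k"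
          using Suc.IH ik' by simp
        finally show ?thesis
          using step_lemma[OF inv inv nz ik'] by (simp add: add.commute)
      qed
    qed
  qed
  then have "Z n i k = (\<Sum>m\<in>{max i k..n}. Z m i m * inverse (Z m m m) * Z m m k)"
    using assms by simp
  also have "\<dots> = (\<Sum>m\<in>{max i k..n}. inverse (qdet m D i m) * qdet m D m m * inverse (qdet m D m k))"
    using T by (intro sum.cong) auto
  finally show ?thesis unfolding Z_def .
qed

end
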